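(* Let $n\in\mathbf{N}$ and let $A\subset[n]$ have property P. If $\left|A\cap\left(\frac{2n}{3},n\right]\right|\geqslant\frac{2n}{9}+\frac43$, then $|A|\leqslant\left\lceil\frac n3\right\rceil$.
   Context: A set $A\subset\mathbf{N}$ has property P if there are no $x,y,z\in A$ (not necessarily distinct $x,y$) with $z<x$, $z<y$ and $z\mid x+y$. $(\alpha,\beta]$ denotes the set of integers $m$ with $\alpha<m\le\beta$. *)

theory Defs
  imports Complex_Main
begin

definition property_P :: "nat set \<Rightarrow> bool" where
  "property_P A \<longleftrightarrow> \<not> (\<exists>x\<in>A. \<exists>y\<in>A. \<exists>z\<in>A. z < x \<and> z < y \<and> z dvd (x + y))"

end

theory Submission imports Defs begin

lemma pair_bound:
  fixes S :: "nat set" and lo hi m :: nat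
  assumes "lo + hi = m"
    and "\<And>x y. x \<in> S \<Longrightarrow> y \<in> S \<Longrightarrow> x + y \<noteq> m"
  shows "2 * card (S \<inter> {lo..hi}) \<le> card {lo..hi}"
proof -
  let ?T = "S \<inter> {lo..hi}"
  define f where "f = (\<lambda>x::nat. m - x)"
  have inj: "inj_on f ?T" unfolding f_def inj_on_def using assms(1) by auto
  have sub: "f ` ?T \<subseteq> {lo..hi} - ?T"
  proof
    fix w assume "w \<in> f ` ?T"
    then obtain x where x: "x \<in> ?T" "w = m - x" unfolding f_def by auto
    have "w \<in> {lo..hi}" using x assms(1) by auto
    moreover have "w \<notin> S" using assms(2)[of x w] x assms(1) by auto
    ultimately show "w \<in> {lo..hi} - ?T" by auto
  qed
  have "card ?T = card (f ` ?T)" using inj by (simp add: card_image)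
  also have "\<dots> \<le> card ({lo..hi} - ?T)" using sub by (intro card_mono) auto
  also have "\<dots> = card {lo..hi} - card ?T" by (rule card_Diff_subset) auto
  finally show ?thesis
    using card_mono[of "{lo..hi}" ?T] by auto
qed

lemma H_lemma:
  fixes B X I :: "nat set"
  assumes "finite I" "B \<subseteq> I" "X \<subseteq> I"
  shows "card B + card X \<le> card I + card (B \<inter> X)"
proof -
  have fB: "finite B" using assms(1,2) by (rule finite_subset[rotated])
  have fX: "finite X" using assms(1,3) by (rule finite_subset[rotated])
  have e1: "card B = card (B \<inter> X) + card (B - X)" by (rule card_Int_Diff[OF fB])
  have e2: "card (B - X) \<le> card (I - X)" using assms(1,2) by (intro card_mono) auto
  have e3: "card (I - X) = card I - card X" by (rule card_Diff_subset[OF fX assms(3)])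
  have e4: "card X \<le> card I" by (rule card_mono[OF assms(1,3)])
  show ?thesis using e1 e2 e3 e4 by linarith
qed

lemma cover_lemma:
  fixes B X1 X2 I :: "nat set"
  assumes "finite I" "B \<subseteq> I" "X1 \<subseteq> I" "X2 \<subseteq> I" "I \<subseteq> X1 \<union> X2"
    "2 * card (B \<inter> X1) \<le> card X1" "2 * card (B \<inter> X2) \<le> card X2"
  shows "3 * card B \<le> 2 * card I"
proof -
  have h1: "card B + card X1 \<le> card I + card (B \<inter> X1)" by (rule H_lemma[OF assms(1,2,3)])
  have h2: "card B + card X2 \<le> card I + card (B \<inter> X2)" by (rule H_lemma[OF assms(1,2,4)])
  have "B = (B \<inter> X1) \<union> (B \<inter> X2)" using assms by auto
  then have "card B \<le> card (B \<inter> X1) + card (B \<inter> X2)" using card_Un_le[of "B \<inter> X1" "B \<inter> X2"] by simp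
  then show ?thesis using h1 h2 assms(6,7) by linarith
qed

lemma disj_lemma:
  fixes B X1 X2 I :: "nat set"
  assumes "finite I" "B \<subseteq> I" "X1 \<subseteq> I" "X2 \<subseteq> I" "X1 \<inter> X2 = {}"
  shows "card B + card X1 + card X2 \<le> card I + card (B \<inter> X1) + card (B \<inter> X2)"
proof -
  have f: "finite X1" "finite X2" using assms(1,3,4) by (auto intro: finite_subset[rotated])
  have "card B + card (X1 \<union> X2) \<le> card I + card (B \<inter> (X1 \<union> X2))"
    using assms(3,4) by (intro H_lemma[OF assms(1,2)]) auto
  moreover have "card (X1 \<union> X2) = card X1 + card X2" using f assms(5) by (simp add: card_Un_disjoint)
  moreover have "B \<inter> (X1 \<union> X2) = (B \<inter> X1) \<union> (B \<inter> X2)" by auto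
  moreover have "card ((B \<inter> X1) \<union> (B \<inter> X2)) = card (B \<inter> X1) + card (B \<inter> X2)"
    using f assms(5) by (intro card_Un_disjoint) auto
  ultimately show ?thesis by simp
qed

lemma step1:
  fixes B :: "nat set" and a n z :: nat
  assumes "B \<subseteq> {a..n}" "0 < z" "z < a" "a \<le> n"
    and nosum: "\<forall>x\<in>B. \<forall>y\<in>B. \<not> z dvd (x+y)"
  shows "(n+1-a \<le> z \<and> 2 * card B \<le> z) \<or> 3 * card B \<le> 2*(n+1-a)"
proof -
  define L where "L = n+1-a"
  have cI: "card {a..n} = L" unfolding L_def by simp
  define m1 where "m1 = z * ((a+n) div z)"
  define m2 where "m2 = m1 + z"
  have "m1 + (a+n) mod z = a+n" unfolding m1_def by (rule mult_div_mod_eq)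
  moreover have "(a+n) mod z < z" using assms(2) by simp
  ultimately have m1le: "m1 \<le> a+n" and m2gt: "a+n < m2" unfolding m2_def by linarith+
  have d1: "z dvd m1" unfolding m1_def by simp
  have d2: "z dvd m2" unfolding m2_def using d1 by simp
  have ma: "a \<le> m1" using m2gt assms(3,4) unfolding m2_def by linarith
  have ns: "\<And>m x y. z dvd m \<Longrightarrow> x \<in> B \<Longrightarrow> y \<in> B \<Longrightarrow> x + y \<noteq> m"
    using nosum by blast
  have K1: "2 * card (B \<inter> {a..m1-a}) \<le> card {a..m1-a}"
    by (rule pair_bound[where m=m1]) (use ma ns d1 in auto)
  have K2: "2 * card (B \<inter> {m2-n..n}) \<le> card {m2-n..n}"
    by (rule pair_bound[where m=m2]) (use m2gt ns d2 in auto)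
  have s1: "{a..m1-a} \<subseteq> {a..n}" using m1le by auto
  have s2: "{m2-n..n} \<subseteq> {a..n}" using m2gt by auto
  show ?thesis
  proof (cases "z < L")
    case True
    have "m2 - n \<le> m1 - a + 1" using True m2gt ma unfolding L_def m2_def by arith
    then have "{a..n} \<subseteq> {a..m1-a} \<union> {m2-n..n}" by auto
    then have "3 * card B \<le> 2 * card {a..n}"
      using cover_lemma[OF _ assms(1) s1 s2 _ K1 K2] by auto
    then show ?thesis using cI unfolding L_def by auto
  next
    case False
    have "m1 - a < m2 - n" using False m2gt ma unfolding L_def m2_def by arith
    then have dj: "{a..m1-a} \<inter> {m2-n..n} = {}" by auto
    have "card B + card {a..m1-a} + card {m2-n..n} \<le> card {a..n} + card (B \<inter> {a..m1-a}) + card (B \<inter> {m2-n..n})"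
      using disj_lemma[OF _ assms(1) s1 s2 dj] by auto
    moreover have "card {a..m1-a} + card {m2-n..n} + z \<ge> 2 * L"
      using m1le m2gt ma unfolding L_def m2_def card_atLeastAtMost by arith
    ultimately have "2 * card B \<le> z" using K1 K2 cI by linarith
    then show ?thesis using False unfolding L_def by auto
  qed
qed


lemma core3: "3*c \<le> X+2 \<Longrightarrow> 2*p \<le> X \<Longrightarrow> c+p \<le> (X::nat)"
proof (cases "X \<ge> 4")
  case True
  assume "3*c \<le> X+2" "2*p \<le> X"
  then show ?thesis using True by linarith
next
  case False
  assume h: "3*c \<le> X+2" "2*p \<le> X"
  from False have "X = 0 \<or> X = 1 \<or> X = 2 \<or> X = 3" by auto
  then show ?thesis using h by auto
qed
lemma arith1: "(c::nat) + k \<le> zl + 1 \<Longrightarrow> 2*a \<le> 3*k \<Longrightarrow> 2*p \<le> X \<Longrightarrow> X + 2*a = 3*zl + 1 \<Longrightarrow> c + p \<le> X"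
  by (rule core3) linarith+
lemma arith2: "(c::nat) + zh \<le> a \<Longrightarrow> 3*a \<le> 2*n+3 \<Longrightarrow> 2*p \<le> X \<Longrightarrow> X + 3*zh = 2*n+1 \<Longrightarrow> c + p \<le> X"
  by (rule core3) linarith+

theorem mainTheorem9:
  fixes n :: nat and A :: "nat set"
  assumes "n \<ge> 1"
    and "A \<subseteq> {1..n}"
    and "property_P A"
    and "real (card {m \<in> A. 2 * real n / 3 < real m \<and> m \<le> n}) \<ge> 2 * real n / 9 + 4 / 3"
  shows "real (card A) \<le> of_int \<lceil>real n / 3\<rceil>"
proof -
  have An: "A \<subseteq> {1..n}" and P: "property_P A" using assms by auto
  define a where "a = 2*n div 3 + 1"
  have dm: "3 * (2*n div 3) + 2*n mod 3 = 2*n" by (rule mult_div_mod_eq)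
  have mm: "2*n mod 3 < 3" by simp
  have a1a: "2*n < 3*a" "3*a \<le> 2*n+3" "1 \<le> a" using a_def dm mm by linarith+
  have a1b: "a \<le> n"
  proof (cases "n \<ge> 3")
    case True then show ?thesis using a1a by linarith
  next
    case False
    then have "n = 1 \<or> n = 2" using assms(1) by auto
    then show ?thesis unfolding a_def by auto
  qed
  have a1: "2*n < 3*a" "3*a \<le> 2*n+3" "a \<le> n" "1 \<le> a" using a1a a1b by auto
  define B where "B = A \<inter> {a..n}"
  define C where "C = A \<inter> {..<a}"
  define L where "L = n+1-a"
  have finA: "finite A" using finite_subset[OF An] by simp
  have BI: "B \<subseteq> {a..n}" unfolding B_def by auto
  have cI: "card {a..n} = L" unfolding L_def by simp
  have LL: "L + a = n + 1" unfolding L_def using a1 by simp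
  have setEq: "{m \<in> A. 2 * real n / 3 < real m \<and> m \<le> n} = B"
  proof -
    have eqm: "2 * real n / 3 < real m \<longleftrightarrow> a \<le> m" for m
    proof -
      have "2 * real n / 3 < real m \<longleftrightarrow> real (2*n) < real (3*m)" by auto
      also have "\<dots> \<longleftrightarrow> 2*n < 3*m" by (rule of_nat_less_iff)
      also have "\<dots> \<longleftrightarrow> a \<le> m"
      proof
        assume "2*n < 3*m"
        then have "3*a < 3*m+3" using a1 by linarith
        then show "a \<le> m" by simp
      next
        assume "a \<le> m"
        then show "2*n < 3*m" using a1 by linarith
      qed
      finally show ?thesis .
    qed
    show ?thesis unfolding B_def set_eq_iff mem_Collect_eq Int_iff atLeastAtMost_iff eqm by blast
  qed
  have hb: "2*n + 12 \<le> 9 * card B"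
  proof -
    have "real (card B) \<ge> 2 * real n / 9 + 4 / 3" using assms(4) setEq by simp
    then have "real (2*n+12) \<le> real (9 * card B)" by simp
    then show ?thesis by (simp only: of_nat_le_iff)
  qed
  have cardA: "card A = card B + card C"
  proof -
    have "A = B \<union> C" unfolding B_def C_def using An by auto
    moreover have "B \<inter> C = {}" unfolding B_def C_def by auto
    moreover have "finite B" "finite C" unfolding B_def C_def using finA by auto
    ultimately show ?thesis by (simp add: card_Un_disjoint)
  qed
  have ceil: "\<lceil>real n / 3\<rceil> = int L"
  proof (rule ceiling_unique)
    show "of_int (int L) - 1 < real n / 3" using a1 unfolding L_def by (simp add: of_nat_diff) 
    show "real n / 3 \<le> of_int (int L)" using a1 unfolding L_def by (simp add: of_nat_diff)
  qed
  have Cprops: "0 < z \<and> z < a \<and> (\<forall>x\<in>B. \<forall>y\<in>B. \<not> z dvd (x+y))" if "z \<in> C" for z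
  proof -
    have z: "z \<in> A" "0 < z" "z < a" using that An unfolding C_def by auto
    have "\<not> z dvd (x+y)" if "x \<in> B" "y \<in> B" for x y
    proof -
      have xy: "x \<in> A" "y \<in> A" "z < x" "z < y" using that z unfolding B_def by auto
      show ?thesis using P xy z(1) unfolding property_P_def by blast
    qed
    then show ?thesis using z by auto
  qed
  have C3: "2*a \<le> 3*z" if "z \<in> C" for z
  proof -
    have cp: "0 < z" "z < a" "\<forall>x\<in>B. \<forall>y\<in>B. \<not> z dvd (x+y)" using Cprops[OF that] by auto
    have "(n+1-a \<le> z \<and> 2 * card B \<le> z) \<or> 3 * card B \<le> 2*(n+1-a)"
      by (rule step1[OF BI cp(1,2) a1(3) cp(3)])
    then have "(L \<le> z \<and> 2 * card B \<le> z) \<or> 3 * card B \<le> 2*L" unfolding L_def .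
    then show ?thesis using hb a1 LL by linarith
  qed
  define Clo where "Clo = {z\<in>C. 3*z \<le> a+n}"
  define Chi where "Chi = {z\<in>C. a+n < 3*z}"
  have finC: "finite C" unfolding C_def by auto
  have cardC: "card C = card Clo + card Chi"
  proof -
    have "C = Clo \<union> Chi" "Clo \<inter> Chi = {}" unfolding Clo_def Chi_def by auto
    moreover have "finite Clo" "finite Chi" using finC unfolding Clo_def Chi_def by auto
    ultimately show ?thesis by (simp add: card_Un_disjoint)
  qed
  obtain hl where hl: "hl \<le> n" "card Clo + card (B \<inter> {a..hl}) \<le> card {a..hl}"
      "2 * card (B \<inter> {a..hl}) \<le> card {a..hl}"
  proof (cases "Clo = {}")
    case True
    have "{a..a-1} = ({}::nat set)" using a1 by auto
    then show ?thesis using that[of "a-1"] True a1 by auto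
  next
    case False
    define zl where "zl = Max Clo"
    have finlo: "finite Clo" using finC unfolding Clo_def by auto
    have zl: "zl \<in> Clo" unfolding zl_def using False finlo by auto
    have zlC: "zl \<in> C" and zla: "3*zl \<le> a+n" using zl unfolding Clo_def by auto
    have z2: "2*a \<le> 3*zl" using C3[OF zlC] .
    have K: "2 * card (B \<inter> {a..3*zl-a}) \<le> card {a..3*zl-a}"
    proof (rule pair_bound[where m="3*zl"])
      show "a + (3*zl - a) = 3*zl" using z2 by simp
      show "x + y \<noteq> 3*zl" if "x \<in> B" "y \<in> B" for x y
        using Cprops[OF zlC] that by (metis dvd_triv_right)
    qed
    define k where "k = (2*a+2) div 3"
    have dk: "3 * ((2*a+2) div 3) + (2*a+2) mod 3 = 2*a+2" by (rule mult_div_mod_eq)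
    have mk: "(2*a+2) mod 3 < 3" by simp
    have k3: "2*a \<le> 3*k" "3*k \<le> 2*a+2" using k_def dk mk by linarith+
    have sub: "Clo \<subseteq> {k..zl}"
    proof
      fix z assume z: "z \<in> Clo"
      then have "2*a \<le> 3*z" using C3 unfolding Clo_def by auto
      then have "3*k < 3*z+3" using k3 by linarith
      then have "k \<le> z" by simp
      moreover have "z \<le> zl" unfolding zl_def using finlo z by auto
      ultimately show "z \<in> {k..zl}" by auto
    qed
    have "card Clo \<le> card {k..zl}" using sub by (intro card_mono) auto
    moreover have "k \<le> zl" using sub zl by auto
    ultimately have cl: "card Clo + k \<le> zl + 1" by simp
    have cx: "card {a..3*zl-a} + 2*a = 3*zl + 1" using z2 by simp
    have "card Clo + card (B \<inter> {a..3*zl-a}) \<le> card {a..3*zl-a}"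
      by (rule arith1[OF cl k3(1) K cx])
    moreover have "3*zl - a \<le> n" using zla by simp
    ultimately show ?thesis using that[of "3*zl-a"] K by auto
  qed
  obtain lh where lh: "a \<le> lh" "card Chi + card (B \<inter> {lh..n}) \<le> card {lh..n}"
      "2 * card (B \<inter> {lh..n}) \<le> card {lh..n}"
  proof (cases "Chi = {}")
    case True
    have "{n+1..n} = ({}::nat set)" by auto
    then show ?thesis using that[of "n+1"] True a1 by auto
  next
    case False
    define zh where "zh = Min Chi"
    have finhi: "finite Chi" using finC unfolding Chi_def by auto
    have zh: "zh \<in> Chi" unfolding zh_def using False finhi by auto
    have zhC: "zh \<in> C" and zha: "a+n < 3*zh" using zh unfolding Chi_def by auto
    have zhlt: "zh < a" using Cprops[OF zhC] by auto
    have K: "2 * card (B \<inter> {3*zh-n..n}) \<le> card {3*zh-n..n}"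
    proof (rule pair_bound[where m="3*zh"])
      show "(3*zh - n) + n = 3*zh" using zha by simp
      show "x + y \<noteq> 3*zh" if "x \<in> B" "y \<in> B" for x y
        using Cprops[OF zhC] that by (metis dvd_triv_right)
    qed
    have sub: "Chi \<subseteq> {zh..<a}"
    proof
      fix z assume z: "z \<in> Chi"
      then have "z < a" using Cprops unfolding Chi_def by auto
      moreover have "zh \<le> z" unfolding zh_def using finhi z by auto
      ultimately show "z \<in> {zh..<a}" by auto
    qed
    have "card Chi \<le> card {zh..<a}" using sub by (intro card_mono) auto
    then have cl: "card Chi + zh \<le> a" using zhlt by simp
    have "3*zh \<le> 2*n" using zhlt a1 by linarith
    then have cx: "card {3*zh-n..n} + 3*zh = 2*n+1" using zha by simp
    have "card Chi + card (B \<inter> {3*zh-n..n}) \<le> card {3*zh-n..n}"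
      by (rule arith2[OF cl a1(2) K cx])
    moreover have "a \<le> 3*zh - n" using zha by simp
    ultimately show ?thesis using that[of "3*zh-n"] K by auto
  qed
  have s1: "{a..hl} \<subseteq> {a..n}" using hl by auto
  have s2: "{lh..n} \<subseteq> {a..n}" using lh by auto
  have key: "card B + card C \<le> L"
  proof (cases "lh \<le> hl + 1")
    case True
    then have "{a..n} \<subseteq> {a..hl} \<union> {lh..n}" by auto
    then have "3 * card B \<le> 2 * card {a..n}"
      using cover_lemma[OF _ BI s1 s2 _ hl(3) lh(3)] by auto
    then show ?thesis using cI hb a1 LL by linarith
  next
    case False
    then have dj: "{a..hl} \<inter> {lh..n} = {}" by auto
    have "card B + card {a..hl} + card {lh..n} \<le> card {a..n} + card (B \<inter> {a..hl}) + card (B \<inter> {lh..n})"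
      using disj_lemma[OF _ BI s1 s2 dj] by auto
    then show ?thesis using hl(2) lh(2) cI cardC by linarith
  qed
  show ?thesis using key cardA ceil by simp
qed

end
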